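(* Let $k\ge 1$, $H>0$, $\beta>0$, $h>0$, and consider a hierarchical-leadership flock $[0,1,\dots,k]$ with leader sets $\mathcal{L}(i)\subseteq\{0,\dots,i-1\}$, $\mathcal{L}(i)\neq\varnothing$ for $i\ge1$. Let $\tilde x_0[n],\dots,\tilde x_k[n]\in\mathbb{R}^3$ ($n\ge 0$) be positions, for $j\in\mathcal{L}(i)$ let $a_{ij}[n]=H/(1+|\tilde x_j[n]-\tilde x_i[n]|^2/2)^{\beta}$ and $a_{ij}[n]=0$ otherwise, $d_i[n]=\sum_{j\in\mathcal{L}(i)}a_{ij}[n]$, and let $L_n$ be the $k\times k$ matrix (indices $1,\dots,k$) with $(L_n)_{ii}=d_i[n]$, $(L_n)_{ij}=-a_{ij}[n]$ for $1\le j<i$, $(L_n)_{ij}=0$ for $j>i$; put $S[n]=I-hL_n$. Suppose $|x[n]|^2\le B$ for all $n\ge0$, where $x[n]=(\tilde x_i[n]-\tilde x_0[n])_{i=1}^k\in\mathbb{R}^{3k}$, let $d_\ast=H/(1+B)^\beta$, $\rho_h=1-hd_\ast$, and assume $0<h<\frac{1}{2kH}$. Let $T$ be the $k\times k$ matrix with $T_{ij}=1$ for $i\ge j$ and $T_{ij}=0$ otherwise. Then for all $n\ge 0$, \[S[n]\prec\rho_hT\quad\text{and}\quad S[n-1]\cdots S[0]\prec\rho_h^{\,n}T^n.\]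
   Context: $B\prec C$ means $|b_{ij}|\le c_{ij}$ for all entries. A hierarchical-leadership flock is one whose agents are labeled $0,\dots,k$ so that $a_{ij}>0$ only if $j<i$ and each agent $i>0$ has a nonempty leader set $\mathcal{L}(i)=\{j:a_{ij}>0\}$. For $n=0$ the empty product is the identity. *)

theory Defs
  imports "HOL-Analysis.Analysis" "Jordan_Normal_Form.Matrix"
begin

definition mat_prec :: "real mat \<Rightarrow> real mat \<Rightarrow> bool" (infix "\<prec>\<^sub>m" 50) where
  "B \<prec>\<^sub>m C \<longleftrightarrow> dim_row B = dim_row C \<and> dim_col B = dim_col C \<and>
     (\<forall>i < dim_row B. \<forall>j < dim_col B. \<bar>B $$ (i, j)\<bar> \<le> C $$ (i, j))"

definition hier_leader_sets :: "nat \<Rightarrow> (nat \<Rightarrow> nat set) \<Rightarrow> bool" where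
  "hier_leader_sets k Ld \<longleftrightarrow> (\<forall>i\<in>{1..k}. Ld i \<subseteq> {0..<i} \<and> Ld i \<noteq> {})"

definition flock_a :: "real \<Rightarrow> real \<Rightarrow> (nat \<Rightarrow> nat set) \<Rightarrow> (nat \<Rightarrow> nat \<Rightarrow> real^3)
    \<Rightarrow> nat \<Rightarrow> nat \<Rightarrow> nat \<Rightarrow> real" where
  "flock_a H \<beta> Ld xt n i j =
     (if j \<in> Ld i then H / (1 + (norm (xt n j - xt n i))\<^sup>2 / 2) powr \<beta> else 0)"

definition flock_d :: "real \<Rightarrow> real \<Rightarrow> (nat \<Rightarrow> nat set) \<Rightarrow> (nat \<Rightarrow> nat \<Rightarrow> real^3)
    \<Rightarrow> nat \<Rightarrow> nat \<Rightarrow> real" where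
  "flock_d H \<beta> Ld xt n i = (\<Sum>j\<in>Ld i. flock_a H \<beta> Ld xt n i j)"

text \<open>The k\<times>k matrix L_n; paper indices 1..k correspond to 0-based matrix indices 0..k-1.\<close>
definition flock_L :: "nat \<Rightarrow> real \<Rightarrow> real \<Rightarrow> (nat \<Rightarrow> nat set) \<Rightarrow> (nat \<Rightarrow> nat \<Rightarrow> real^3)
    \<Rightarrow> nat \<Rightarrow> real mat" where
  "flock_L k H \<beta> Ld xt n = mat k k (\<lambda>(r, c).
     if r = c then flock_d H \<beta> Ld xt n (r + 1)
     else if c < r then - flock_a H \<beta> Ld xt n (r + 1) (c + 1)
     else 0)"

definition flock_S :: "nat \<Rightarrow> real \<Rightarrow> real \<Rightarrow> real \<Rightarrow> (nat \<Rightarrow> nat set) \<Rightarrow> (nat \<Rightarrow> nat \<Rightarrow> real^3)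
    \<Rightarrow> nat \<Rightarrow> real mat" where
  "flock_S k h H \<beta> Ld xt n = 1\<^sub>m k - h \<cdot>\<^sub>m flock_L k H \<beta> Ld xt n"

fun flock_Sprod :: "nat \<Rightarrow> real \<Rightarrow> real \<Rightarrow> real \<Rightarrow> (nat \<Rightarrow> nat set) \<Rightarrow> (nat \<Rightarrow> nat \<Rightarrow> real^3)
    \<Rightarrow> nat \<Rightarrow> real mat" where
  "flock_Sprod k h H \<beta> Ld xt 0 = 1\<^sub>m k"
| "flock_Sprod k h H \<beta> Ld xt (Suc n) = flock_S k h H \<beta> Ld xt n * flock_Sprod k h H \<beta> Ld xt n"

definition lower_ones :: "nat \<Rightarrow> real mat" where
  "lower_ones k = mat k k (\<lambda>(i, j). if j \<le> i then 1 else 0)"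

end

theory Submission
  imports Defs
begin

lemma prec_mult:
  assumes A: "A \<in> carrier_mat n m" and B: "B \<in> carrier_mat m p"
    and C: "C \<in> carrier_mat n m" and D: "D \<in> carrier_mat m p"
    and AC: "A \<prec>\<^sub>m C" and BD: "B \<prec>\<^sub>m D"
  shows "A * B \<prec>\<^sub>m C * D"
  unfolding mat_prec_def
proof (intro conjI allI impI)
  show "dim_row (A * B) = dim_row (C * D)" "dim_col (A * B) = dim_col (C * D)"
    using A B C D by auto
  fix i j assume i: "i < dim_row (A * B)" and j: "j < dim_col (A * B)"
  have i': "i < n" and j': "j < p" using i j A B by auto
  have ac: "\<And>l. l < m \<Longrightarrow> \<bar>A $$ (i, l)\<bar> \<le> C $$ (i, l)"
    using AC A i' unfolding mat_prec_def by auto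
  have bd: "\<And>l. l < m \<Longrightarrow> \<bar>B $$ (l, j)\<bar> \<le> D $$ (l, j)"
    using BD B j' unfolding mat_prec_def by auto
  have "(A * B) $$ (i, j) = (\<Sum>l\<in>{0..<m}. A $$ (i, l) * B $$ (l, j))"
    using A B i' j' by (simp add: scalar_prod_def)
  moreover have "(C * D) $$ (i, j) = (\<Sum>l\<in>{0..<m}. C $$ (i, l) * D $$ (l, j))"
    using C D i' j' by (simp add: scalar_prod_def)
  moreover have "\<bar>\<Sum>l\<in>{0..<m}. A $$ (i, l) * B $$ (l, j)\<bar> \<le> (\<Sum>l\<in>{0..<m}. C $$ (i, l) * D $$ (l, j))"
  proof -
    have "\<bar>\<Sum>l\<in>{0..<m}. A $$ (i, l) * B $$ (l, j)\<bar> \<le> (\<Sum>l\<in>{0..<m}. \<bar>A $$ (i, l) * B $$ (l, j)\<bar>)"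
      by (rule sum_abs)
    also have "\<dots> \<le> (\<Sum>l\<in>{0..<m}. C $$ (i, l) * D $$ (l, j))"
    proof (rule sum_mono)
      fix l assume "l \<in> {0..<m}"
      hence l: "l < m" by auto
      show "\<bar>A $$ (i, l) * B $$ (l, j)\<bar> \<le> C $$ (i, l) * D $$ (l, j)"
        unfolding abs_mult
        by (rule mult_mono[OF ac[OF l] bd[OF l]]) (use ac[OF l] in auto)
    qed
    finally show ?thesis .
  qed
  ultimately show "\<bar>(A * B) $$ (i, j)\<bar> \<le> (C * D) $$ (i, j)" by simp
qed

lemma lower_ones_carrier[simp]: "lower_ones k \<in> carrier_mat k k"
  unfolding lower_ones_def by auto

lemma smult_smult_mat: "(a::real) \<cdot>\<^sub>m (b \<cdot>\<^sub>m A) = (a * b) \<cdot>\<^sub>m A"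
  by (rule eq_matI) auto

lemma pow_comm:
  assumes "T \<in> carrier_mat k k"
  shows "T * T ^\<^sub>m n = T ^\<^sub>m n * T"
proof (induction n)
  case 0
  then show ?case using assms by simp
next
  case (Suc n)
  have "T * T ^\<^sub>m Suc n = (T * T ^\<^sub>m n) * T"
    using assms by (simp add: assoc_mult_mat[of T k k "T ^\<^sub>m n" k T k])
  also have "\<dots> = T ^\<^sub>m Suc n * T" using Suc by simp
  finally show ?case .
qed

theorem corollary1:
  fixes k :: nat and H \<beta> h B :: real
    and Ld :: "nat \<Rightarrow> nat set" and xt :: "nat \<Rightarrow> nat \<Rightarrow> real^3"
  assumes "k \<ge> 1" and "H > 0" and "\<beta> > 0" and "h > 0"
    and "hier_leader_sets k Ld"
    and "\<And>n. (\<Sum>i = 1..k. (norm (xt n i - xt n 0))\<^sup>2) \<le> B"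
    and "h < 1 / (2 * real k * H)"
  shows "\<forall>n. flock_S k h H \<beta> Ld xt n \<prec>\<^sub>m (1 - h * (H / (1 + B) powr \<beta>)) \<cdot>\<^sub>m lower_ones k
          \<and> flock_Sprod k h H \<beta> Ld xt n \<prec>\<^sub>m
              (1 - h * (H / (1 + B) powr \<beta>)) ^ n \<cdot>\<^sub>m (lower_ones k ^\<^sub>m n)"
proof -
  note k1 = assms(1) and Hp = assms(2) and bp = assms(3) and hp = assms(4)
    and hl = assms(5) and bnd = assms(6) and hsmall = assms(7)
  define ds where "ds = H / (1 + B) powr \<beta>"
  define \<rho> where "\<rho> = 1 - h * ds"
  have B0: "0 \<le> B" using bnd[of 0] by (meson order_trans sum_nonneg zero_le_power2)
  have ds0: "0 < ds" unfolding ds_def using Hp B0 by simp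
  have ge1: "\<And>x::real. 0 \<le> x \<Longrightarrow> 1 \<le> (1 + x) powr \<beta>"
    using bp by (simp add: ge_one_powr_ge_zero)
  have dsH: "ds \<le> H" unfolding ds_def using Hp ge1[OF B0]
    by (simp add: divide_le_eq)
  have hkH: "h * (real k * H) < 1/2"
    using hsmall k1 Hp by (simp add: field_simps)
  have hH: "h * H < 1/2"
  proof -
    have "h * H \<le> h * (real k * H)" using k1 Hp hp by simp
    thus ?thesis using hkH by linarith
  qed
  have rho_half: "1/2 < \<rho>"
  proof -
    have "h * ds \<le> h * H" using dsH hp by (simp add: mult_left_mono)
    thus ?thesis unfolding \<rho>_def using hH by linarith
  qed
  have a_bounds: "0 \<le> flock_a H \<beta> Ld xt n i j \<and> flock_a H \<beta> Ld xt n i j \<le> H" for n i j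
  proof (cases "j \<in> Ld i")
    case True
    have "1 \<le> (1 + (norm (xt n j - xt n i))\<^sup>2 / 2) powr \<beta>" by (rule ge1) simp
    then show ?thesis using True Hp unfolding flock_a_def
      by (simp add: divide_le_eq)
  next
    case False
    then show ?thesis using Hp unfolding flock_a_def by simp
  qed
  have a_low: "ds \<le> flock_a H \<beta> Ld xt n i j" if i: "i \<in> {1..k}" and j: "j \<in> Ld i" for n i j
  proof -
    have ji: "j < i" using hl i j unfolding hier_leader_sets_def by fastforce
    have nj: "(norm (xt n j - xt n i))\<^sup>2 / 2 \<le> B"
    proof (cases "j = 0")
      case True
      have "(norm (xt n i - xt n 0))\<^sup>2 \<le> (\<Sum>l = 1..k. (norm (xt n l - xt n 0))\<^sup>2)"
        by (rule member_le_sum) (use i in auto)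
      then show ?thesis using bnd[of n] True B0 by (simp add: norm_minus_commute)
    next
      case False
      have j1: "j \<in> {1..k}" using False ji i by auto
      have "(norm (xt n i - xt n 0))\<^sup>2 + (norm (xt n j - xt n 0))\<^sup>2
            = (\<Sum>l\<in>{i, j}. (norm (xt n l - xt n 0))\<^sup>2)" using ji by simp
      also have "\<dots> \<le> (\<Sum>l = 1..k. (norm (xt n l - xt n 0))\<^sup>2)"
        by (rule sum_mono2) (use i j1 in auto)
      finally have s: "(norm (xt n i - xt n 0))\<^sup>2 + (norm (xt n j - xt n 0))\<^sup>2 \<le> B"
        using bnd[of n] by linarith
      have "norm (xt n j - xt n i) \<le> norm (xt n i - xt n 0) + norm (xt n j - xt n 0)"
        using norm_triangle_ineq4[of "xt n j - xt n 0" "xt n i - xt n 0"]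
        by (simp add: algebra_simps)
      hence "(norm (xt n j - xt n i))\<^sup>2 \<le> (norm (xt n i - xt n 0) + norm (xt n j - xt n 0))\<^sup>2"
        by (simp add: power_mono)
      also have "\<dots> \<le> 2 * ((norm (xt n i - xt n 0))\<^sup>2 + (norm (xt n j - xt n 0))\<^sup>2)"
        by (smt (verit) sum_squares_bound power2_sum zero_le_power2 power2_diff)
      finally show ?thesis using s by simp
    qed
    have pos: "0 < 1 + (norm (xt n j - xt n i))\<^sup>2 / 2" by (smt (verit) zero_le_power2 divide_nonneg_pos)
    have "(1 + (norm (xt n j - xt n i))\<^sup>2 / 2) powr \<beta> \<le> (1 + B) powr \<beta>"
      by (rule powr_mono2) (use bp nj pos in auto)
    moreover have "0 < (1 + (norm (xt n j - xt n i))\<^sup>2 / 2) powr \<beta>" using pos by simp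
    ultimately show ?thesis unfolding ds_def flock_a_def using j Hp
      by (simp add: frac_le)
  qed
  have d_bounds: "ds \<le> flock_d H \<beta> Ld xt n i \<and> flock_d H \<beta> Ld xt n i \<le> real k * H"
    if i: "i \<in> {1..k}" for n i
  proof
    have sub: "Ld i \<subseteq> {0..<i}" and ne: "Ld i \<noteq> {}" using hl i unfolding hier_leader_sets_def by auto
    have fin: "finite (Ld i)" using sub finite_subset by blast
    obtain j where j: "j \<in> Ld i" using ne by blast
    have "flock_a H \<beta> Ld xt n i j \<le> flock_d H \<beta> Ld xt n i"
      unfolding flock_d_def by (rule member_le_sum) (use j fin a_bounds in auto)
    thus "ds \<le> flock_d H \<beta> Ld xt n i" using a_low[OF i j, of n] by linarith
    have "flock_d H \<beta> Ld xt n i \<le> (\<Sum>j\<in>Ld i. H)"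
      unfolding flock_d_def by (rule sum_mono) (use a_bounds in auto)
    also have "\<dots> = real (card (Ld i)) * H" by simp
    also have "\<dots> \<le> real k * H"
    proof -
      have "card (Ld i) \<le> card {0..<i}" by (rule card_mono) (use sub in auto)
      hence "card (Ld i) \<le> k" using i by auto
      thus ?thesis using Hp by simp
    qed
    finally show "flock_d H \<beta> Ld xt n i \<le> real k * H" .
  qed
  have Sprec: "flock_S k h H \<beta> Ld xt n \<prec>\<^sub>m \<rho> \<cdot>\<^sub>m lower_ones k" for n
    unfolding mat_prec_def
  proof (intro conjI allI impI)
    show "dim_row (flock_S k h H \<beta> Ld xt n) = dim_row (\<rho> \<cdot>\<^sub>m lower_ones k)"
      "dim_col (flock_S k h H \<beta> Ld xt n) = dim_col (\<rho> \<cdot>\<^sub>m lower_ones k)"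
      unfolding flock_S_def flock_L_def lower_ones_def by auto
    fix r c assume r: "r < dim_row (flock_S k h H \<beta> Ld xt n)"
      and c: "c < dim_col (flock_S k h H \<beta> Ld xt n)"
    have r': "r < k" and c': "c < k" using r c unfolding flock_S_def flock_L_def by auto
    have Sv: "flock_S k h H \<beta> Ld xt n $$ (r, c) =
       (if r = c then 1 - h * flock_d H \<beta> Ld xt n (r + 1)
        else if c < r then h * flock_a H \<beta> Ld xt n (r + 1) (c + 1) else 0)"
      using r' c' unfolding flock_S_def flock_L_def by simp
    have Tv: "(\<rho> \<cdot>\<^sub>m lower_ones k) $$ (r, c) = (if c \<le> r then \<rho> else 0)"
      using r' c' unfolding lower_ones_def by simp
    show "\<bar>flock_S k h H \<beta> Ld xt n $$ (r, c)\<bar> \<le> (\<rho> \<cdot>\<^sub>m lower_ones k) $$ (r, c)"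
    proof (cases "r = c")
      case True
      have i: "r + 1 \<in> {1..k}" using r' by auto
      note db = d_bounds[OF i, of n]
      have "h * flock_d H \<beta> Ld xt n (r + 1) \<le> h * (real k * H)"
        using db hp by simp
      moreover have "h * ds \<le> h * flock_d H \<beta> Ld xt n (r + 1)" using db hp by simp
      ultimately show ?thesis using True Sv Tv hkH unfolding \<rho>_def by auto
    next
      case False
      note ab = a_bounds[of n "r+1" "c+1"]
      have "h * flock_a H \<beta> Ld xt n (r + 1) (c + 1) \<le> h * H" using ab hp by simp
      moreover have "0 \<le> h * flock_a H \<beta> Ld xt n (r + 1) (c + 1)" using ab hp by simp
      ultimately show ?thesis using False Sv Tv hH rho_half by auto
    qed
  qed
  have Scar: "flock_S k h H \<beta> Ld xt n \<in> carrier_mat k k" for n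
    unfolding flock_S_def flock_L_def by auto
  have Pcar: "flock_Sprod k h H \<beta> Ld xt n \<in> carrier_mat k k" for n
    by (induction n) (auto intro: mult_carrier_mat[OF Scar])
  have Pprec: "flock_Sprod k h H \<beta> Ld xt n \<prec>\<^sub>m \<rho> ^ n \<cdot>\<^sub>m (lower_ones k ^\<^sub>m n)" for n
  proof (induction n)
    case 0
    have "dim_row (lower_ones k) = k" by (simp add: lower_ones_def)
    then show ?case unfolding mat_prec_def by auto
  next
    case (Suc n)
    have "flock_Sprod k h H \<beta> Ld xt (Suc n) \<prec>\<^sub>m (\<rho> \<cdot>\<^sub>m lower_ones k) * (\<rho> ^ n \<cdot>\<^sub>m (lower_ones k ^\<^sub>m n))"
      unfolding flock_Sprod.simps
      by (rule prec_mult[OF Scar Pcar _ _ Sprec Suc]) auto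
    also have "(\<rho> \<cdot>\<^sub>m lower_ones k) * (\<rho> ^ n \<cdot>\<^sub>m (lower_ones k ^\<^sub>m n))
        = \<rho> ^ Suc n \<cdot>\<^sub>m (lower_ones k ^\<^sub>m Suc n)"
    proof -
      have "(\<rho> \<cdot>\<^sub>m lower_ones k) * (\<rho> ^ n \<cdot>\<^sub>m (lower_ones k ^\<^sub>m n))
          = \<rho> \<cdot>\<^sub>m (\<rho> ^ n \<cdot>\<^sub>m (lower_ones k * (lower_ones k ^\<^sub>m n)))"
        by (simp add: mult_smult_assoc_mat[of _ k k _ k] mult_smult_distrib[of _ k k _ k] smult_smult_mat mult.commute)
      also have "\<dots> = \<rho> ^ Suc n \<cdot>\<^sub>m (lower_ones k ^\<^sub>m Suc n)"
        using pow_comm[OF lower_ones_carrier, of k n] by (simp add: smult_smult_mat)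
      finally show ?thesis .
    qed
    finally show ?case .
  qed
  show ?thesis using Sprec Pprec unfolding \<rho>_def ds_def by blast
qed

end
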